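(* Let $\boldsymbol{\mathcal{A}}\in\mathbb{C}^{N\times N\times M\times M}$ and $\mathbf{v},\mathbf{w}\in\mathbb{C}^N$ with $\mathbf{w}^H\mathbf{v}=1$, and run the tensor non-Hermitian Lanczos process (see context) with arbitrary nonsingular choices $\boldsymbol{\gamma}_2,\boldsymbol{\gamma}_3,\dots$. Let $n\ge1$ and suppose $\boldsymbol{\beta}_2,\dots,\boldsymbol{\beta}_n$ are all nonsingular, so that $\boldsymbol{\alpha}_1,\dots,\boldsymbol{\alpha}_n$, $\boldsymbol{\beta}_2,\dots,\boldsymbol{\beta}_n$, $\boldsymbol{\gamma}_2,\dots,\boldsymbol{\gamma}_n$ and hence $\boldsymbol{\mathcal{T}}_n$ are defined. Let $E_1=\mathbf{e}_1\otimes I_M\in\mathbb{C}^{n\times M\times M}$ and $E_1^D=\mathbf{e}_1\otimes I_M$, where $\mathbf{e}_1$ is the first canonical basis vector of $\mathbb{C}^n$. Then $$W^D*\boldsymbol{\mathcal{A}}^{k_*}*V=E_1^D*(\boldsymbol{\mathcal{T}}_n)^{k_*}*E_1\quad\text{for }k=0,1,\dots,2n-1.$$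
   Context: Slicing and products: for a 4-mode tensor, $\boldsymbol{\mathcal{A}}_{i_1,i_2,:,:}$ denotes the $M\times M$ matrix slice; for a 3-mode tensor, $A_{i,:,:}$ likewise. $*$-tensor product: $(\boldsymbol{\mathcal{A}}*\boldsymbol{\mathcal{B}})_{i_1,i_2,:,:}=\sum_k\boldsymbol{\mathcal{A}}_{i_1,k,:,:}\boldsymbol{\mathcal{B}}_{k,i_2,:,:}$. Tensor-hypervector product: $(\boldsymbol{\mathcal{A}}*A)_{i,:,:}=\sum_k\boldsymbol{\mathcal{A}}_{i,k,:,:}A_{k,:,:}$; left action of a 3-mode tensor $B^D$ (superscript $D$ marks tensors acting from the left): $(B^D*\boldsymbol{\mathcal{A}})^D_{i,:,:}=\sum_k B^D_{k,:,:}\boldsymbol{\mathcal{A}}_{k,i,:,:}$; hypervector inner product $B^D*A=\sum_kB^D_{k,:,:}A_{k,:,:}\in\mathbb{C}^{M\times M}$. These products are associative. For $\boldsymbol{\alpha}\in\mathbb{C}^{M\times M}$ and a 3-mode tensor $A$: $(A\times\boldsymbol{\alpha})_{i,:,:}=A_{i,:,:}\boldsymbol{\alpha}$, $(\boldsymbol{\alpha}\times A)_{i,:,:}=\boldsymbol{\alpha}A_{i,:,:}$. For $\mathbf{a}\in\mathbb{C}^N$, $\mathbf{a}\otimes I_M\in\mathbb{C}^{N\times M\times M}$ has slices $(\mathbf{a}\otimes I_M)_{i,:,:}=\mathbf{a}_iI_M$. The $*$-identity $\boldsymbol{\mathcal{I}}_*$ (of the appropriate size) has slices $I_M$ when $i_1=i_2$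 and $0$ otherwise; $\boldsymbol{\mathcal{A}}^{0_*}=\boldsymbol{\mathcal{I}}_*$ and $\boldsymbol{\mathcal{A}}^{k_*}$ is the $k$-fold $*$-product of $\boldsymbol{\mathcal{A}}$ with itself. Tensor non-Hermitian Lanczos process: set $V=\mathbf{v}\otimes I_M$, $W^D=\overline{\mathbf{w}}\otimes I_M$, $V_0=W_0^D=0$, $\boldsymbol{\beta}_1=0$, $V_1=V$, $W_1^D=W^D$. For $k=1,2,\dots$: $\boldsymbol{\alpha}_k=W_k^D*\boldsymbol{\mathcal{A}}*V_k$; $\widehat W_{k+1}^D=W_k^D*\boldsymbol{\mathcal{A}}-\boldsymbol{\alpha}_k\times W_k^D-\boldsymbol{\beta}_k\times W_{k-1}^D$; $\widehat V_{k+1}=\boldsymbol{\mathcal{A}}*V_k-V_k\times\boldsymbol{\alpha}_k-V_{k-1}\times\boldsymbol{\gamma}_k$ (the term with $\boldsymbol{\gamma}_1$ vanishes since $V_0=0$); choose a nonsingular $\boldsymbol{\gamma}_{k+1}\in\mathbb{C}^{M\times M}$; $\boldsymbol{\beta}_{k+1}=\boldsymbol{\gamma}_{k+1}^{-1}(\widehat W_{k+1}^D*\widehat V_{k+1})$; if $\boldsymbol{\beta}_{k+1}$ is singular the process stops, otherwise $V_{k+1}=\widehat V_{k+1}\times\boldsymbol{\beta}_{k+1}^{-1}$ and $W_{k+1}^D=\boldsymbol{\gamma}_{k+1}^{-1}\times\widehat W_{k+1}^D$. Tridiagonal tensor $\boldsymbol{\mathcal{T}}_n\in\mathbb{C}^{n\times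 n\times M\times M}$: $(\boldsymbol{\mathcal{T}}_n)_{i,i,:,:}=\boldsymbol{\alpha}_i$ ($1\le i\le n$), $(\boldsymbol{\mathcal{T}}_n)_{i,i+1,:,:}=\boldsymbol{\gamma}_{i+1}$ ($1\le i\le n-1$), $(\boldsymbol{\mathcal{T}}_n)_{i,i-1,:,:}=\boldsymbol{\beta}_i$ ($2\le i\le n$), all other slices zero. *)

theory Defs
  imports "HOL-Analysis.Analysis"
begin

text \<open>Conventions: indices are 0-based. An M x M complex matrix is 'complex^'m^'m'
(M = CARD('m)). A 3-mode tensor (hypervector) of length N is a function
nat => matrix, only indices < N being relevant; a 4-mode tensor of size N x N x M x M
is a function nat => nat => matrix, only indices < N being relevant.
Left-acting tensors (superscript D) are represented the same way as hypervectors.\<close>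

type_synonym 'm cmat = "complex^'m^'m"
type_synonym 'm hvec = "nat \<Rightarrow> 'm cmat"
type_synonym 'm tens = "nat \<Rightarrow> nat \<Rightarrow> 'm cmat"

definition tprod :: "nat \<Rightarrow> 'm::finite tens \<Rightarrow> 'm tens \<Rightarrow> 'm tens" where
  "tprod N A B = (\<lambda>i j. \<Sum>k<N. A i k ** B k j)"

definition tvec :: "nat \<Rightarrow> 'm::finite tens \<Rightarrow> 'm hvec \<Rightarrow> 'm hvec" where
  "tvec N A X = (\<lambda>i. \<Sum>k<N. A i k ** X k)"

definition tlvec :: "nat \<Rightarrow> 'm::finite hvec \<Rightarrow> 'm tens \<Rightarrow> 'm hvec" where
  "tlvec N Y A = (\<lambda>i. \<Sum>k<N. Y k ** A k i)"

definition hip :: "nat \<Rightarrow> 'm::finite hvec \<Rightarrow> 'm hvec \<Rightarrow> 'm cmat" where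
  "hip N Y X = (\<Sum>k<N. Y k ** X k)"

definition tid :: "'m::finite tens" where
  "tid = (\<lambda>i j. if i = j then mat 1 else 0)"

primrec tpow :: "nat \<Rightarrow> 'm::finite tens \<Rightarrow> nat \<Rightarrow> 'm tens" where
  "tpow N A 0 = tid"
| "tpow N A (Suc k) = tprod N A (tpow N A k)"

definition kronI :: "(nat \<Rightarrow> complex) \<Rightarrow> 'm::finite hvec" where
  "kronI a = (\<lambda>i. mat (a i))"

text \<open>State of the Lanczos process after s steps, i.e. at index k = s+1:
  (V_{k-1}, V_k, W^D_{k-1}, W^D_k, beta_k).  Vectors v, w are 0-indexed functions;
  gam k is the chosen gamma_k (gam 1 is irrelevant since V_0 = 0).\<close>
fun lz_state :: "nat \<Rightarrow> 'm::finite tens \<Rightarrow> (nat \<Rightarrow> complex) \<Rightarrow> (nat \<Rightarrow> complex)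
     \<Rightarrow> (nat \<Rightarrow> 'm cmat) \<Rightarrow> nat \<Rightarrow> 'm hvec \<times> 'm hvec \<times> 'm hvec \<times> 'm hvec \<times> 'm cmat" where
  "lz_state N A v w gam 0 = (\<lambda>_. 0, kronI v, \<lambda>_. 0, kronI (\<lambda>i. cnj (w i)), 0)"
| "lz_state N A v w gam (Suc s) =
     (case lz_state N A v w gam s of (Vp, Vc, Wp, Wc, b) \<Rightarrow>
       let k = Suc s;
           a = hip N Wc (tvec N A Vc);
           hW = (\<lambda>i. tlvec N Wc A i - a ** Wc i - b ** Wp i);
           hV = (\<lambda>i. tvec N A Vc i - Vc i ** a - Vp i ** gam k);
           g = gam (Suc k);
           b' = matrix_inv g ** hip N hW hV
       in (Vc, (\<lambda>i. hV i ** matrix_inv b'), Wc, (\<lambda>i. matrix_inv g ** hW i), b'))"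

definition lzV where "lzV N A v w gam k = fst (snd (lz_state N A v w gam (k - 1)))"
definition lzW where "lzW N A v w gam k = fst (snd (snd (snd (lz_state N A v w gam (k - 1)))))"
definition lzbeta where "lzbeta N A v w gam k = snd (snd (snd (snd (lz_state N A v w gam (k - 1)))))"
definition lzalpha where
  "lzalpha N A v w gam k = hip N (lzW N A v w gam k) (tvec N A (lzV N A v w gam k))"

text \<open>Block tridiagonal tensor T_n (0-based: slice (i,j) is the paper's (i+1,j+1)).\<close>
definition lzT :: "nat \<Rightarrow> 'm::finite tens \<Rightarrow> (nat \<Rightarrow> complex) \<Rightarrow> (nat \<Rightarrow> complex)
     \<Rightarrow> (nat \<Rightarrow> 'm cmat) \<Rightarrow> nat \<Rightarrow> 'm tens" where
  "lzT N A v w gam n = (\<lambda>i j.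
     if i < n \<and> j < n then
       (if i = j then lzalpha N A v w gam (i + 1)
        else if j = i + 1 then gam (i + 2)
        else if i = j + 1 then lzbeta N A v w gam (i + 1)
        else 0)
     else 0)"

definition E1 :: "'m::finite hvec" where
  "E1 = (\<lambda>i. if i = 0 then mat 1 else 0)"

end

theory Submission
  imports Defs
begin

lemma mm_radd: "((A::'a::semiring_1^'n^'m) + B) ** C = A ** C + B ** C"
  by (simp add: matrix_matrix_mult_def vec_eq_iff sum.distrib[symmetric] distrib_right)
lemma mm_ldiff: "(A::'a::ring_1^'n^'m) ** (B - C) = A ** B - A ** C"
  by (simp add: matrix_matrix_mult_def vec_eq_iff sum_subtractf[symmetric] right_diff_distrib)
lemma mm_rdiff: "((A::'a::ring_1^'n^'m) - B) ** C = A ** C - B ** C"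
  by (simp add: matrix_matrix_mult_def vec_eq_iff sum_subtractf[symmetric] left_diff_distrib)
lemma mm_lsum: "(A::'a::semiring_1^'n^'m) ** (\<Sum>k\<in>S. f k) = (\<Sum>k\<in>S. A ** f k)"
  by (induction S rule: infinite_finite_induct) (auto simp: matrix_add_ldistrib)
lemma mm_rsum: "(\<Sum>k\<in>S. f k) ** (A::'a::semiring_1^'n^'m) = (\<Sum>k\<in>S. f k ** A)"
  by (induction S rule: infinite_finite_induct) (auto simp: mm_radd)
lemma inv_r: "invertible (A::'a::semiring_1^'n^'m) \<Longrightarrow> A ** matrix_inv A = mat 1"
  unfolding invertible_def matrix_inv_def by (rule someI2_ex) (assumption, blast)
lemma inv_l: "invertible (A::'a::semiring_1^'n^'m) \<Longrightarrow> matrix_inv A ** A = mat 1"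
  unfolding invertible_def matrix_inv_def by (rule someI2_ex) (assumption, blast)
lemma sum_mat: "(\<Sum>k\<in>S. mat (f k)) = (mat (\<Sum>k\<in>S. f k) :: 'a::comm_semiring_1^'n^'n)"
  by (induction S rule: infinite_finite_induct) (auto simp: mat_def vec_eq_iff)
lemma mat_mul_mat: "mat a ** mat b = (mat (a*b) :: 'a::comm_semiring_1^'n^'n)"
proof -
  have "(\<Sum>k\<in>UNIV. (if i = k then a else 0) * (if k = j then b else (0::'a))) = (if i = j then a*b else 0)" for i j :: 'n
  proof -
    have "(\<Sum>k\<in>UNIV. (if i = k then a else 0) * (if k = j then b else (0::'a))) = (\<Sum>k\<in>UNIV. if k = i then a * (if k = j then b else 0) else 0)"
      by (rule sum.cong) auto
    also have "\<dots> = a * (if i = j then b else 0)" by (simp add: sum.delta')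
    finally show ?thesis by simp
  qed
  then show ?thesis by (simp add: vec_eq_iff matrix_matrix_mult_def mat_def)
qed

lemmas mm_simps = matrix_add_ldistrib mm_radd mm_ldiff mm_rdiff matrix_mul_assoc mm_lsum mm_rsum

lemma sum_swap_lt: "(\<Sum>i<(a::nat). \<Sum>k<(b::nat). f i k) = (\<Sum>k<b. \<Sum>i<a. f i k)"
  by (rule sum.swap)

lemma hip_tvec: "hip N Y (tvec N A X) = hip N (tlvec N Y A) X"
  unfolding hip_def tvec_def tlvec_def
  by (simp add: mm_simps) (rule sum.swap)

lemma tvec_tprod: "tvec N (tprod N A B) X = tvec N A (tvec N B X)"
  unfolding tprod_def tvec_def
  by (simp add: mm_simps) (rule ext, rule sum.swap)

lemma tvec_tid: "i < N \<Longrightarrow> tvec N tid X i = X i"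
  unfolding tvec_def tid_def by (simp add: if_distrib if_distribR sum.delta cong: if_cong)

lemma tvec_cong: "(\<And>i. i < N \<Longrightarrow> X i = X' i) \<Longrightarrow> tvec N A X = tvec N A X'"
  unfolding tvec_def by (auto intro!: ext sum.cong)

lemma hip_cong: "(\<And>i. i < N \<Longrightarrow> X i = X' i) \<Longrightarrow> (\<And>i. i < N \<Longrightarrow> Y i = Y' i) \<Longrightarrow> hip N Y X = hip N Y' X'"
  unfolding hip_def by (auto intro!: sum.cong)

definition PA where "PA N A k X = (tvec N A ^^ k) X"
definition QA where "QA N A k Y = ((\<lambda>Y. tlvec N Y A) ^^ k) Y"

lemma tpow_PA: "i < N \<Longrightarrow> tvec N (tpow N A k) X i = PA N A k X i"
proof (induction k arbitrary: i)
  case 0 then show ?case by (simp add: PA_def tvec_tid)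
next
  case (Suc k)
  have "tvec N (tpow N A (Suc k)) X = tvec N A (tvec N (tpow N A k) X)" by (simp add: tvec_tprod)
  also have "\<dots> = tvec N A (PA N A k X)" by (rule tvec_cong) (simp add: Suc.IH)
  finally show ?case by (simp add: PA_def)
qed

lemma hip_PA_split: "hip N Y (PA N A (a + b) X) = hip N (QA N A a Y) (PA N A b X)"
proof (induction a arbitrary: Y)
  case 0 then show ?case by (simp add: PA_def QA_def)
next
  case (Suc a)
  have "hip N Y (PA N A (Suc a + b) X) = hip N Y (tvec N A (PA N A (a + b) X))" by (simp add: PA_def)
  also have "\<dots> = hip N (tlvec N Y A) (PA N A (a + b) X)" by (rule hip_tvec)
  also have "\<dots> = hip N (QA N A a (tlvec N Y A)) (PA N A b X)" by (rule Suc.IH)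
  also have "\<dots> = hip N (QA N A (Suc a) Y) (PA N A b X)" by (simp add: QA_def funpow_Suc_right del: funpow.simps)
  finally show ?case .
qed

lemma hip_tpow: "hip N Y (tvec N (tpow N A k) X) = hip N Y (PA N A k X)"
  by (rule hip_cong) (auto simp: tpow_PA)


locale lzl =
  fixes N :: nat and A :: "'m::finite tens" and v w :: "nat \<Rightarrow> complex"
    and gam :: "nat \<Rightarrow> 'm cmat" and m :: nat
  assumes wv: "(\<Sum>i<N. cnj (w i) * v i) = 1"
    and gam_inv: "\<forall>k\<ge>2. invertible (gam k)"
    and beta_inv: "\<forall>j. 2 \<le> j \<and> j \<le> Suc m \<longrightarrow> invertible (lzbeta N A v w gam j)"
begin

definition "VV j = (if j = 0 then (\<lambda>_. 0) else lzV N A v w gam j)"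
definition "WW j = (if j = 0 then (\<lambda>_. 0) else lzW N A v w gam j)"
definition "al j = lzalpha N A v w gam j"
definition "be j = lzbeta N A v w gam j"
definition "hV j = (\<lambda>i. tvec N A (VV j) i - VV j i ** al j - VV (j - 1) i ** gam j)"
definition "hW j = (\<lambda>i. tlvec N (WW j) A i - al j ** WW j i - be j ** WW (j - 1) i)"

lemma state: "lz_state N A v w gam s = (VV s, VV (Suc s), WW s, WW (Suc s), be (Suc s))"
proof -
  have f1: "fst (lz_state N A v w gam s) = VV s"
  proof (cases s)
    case 0 then show ?thesis by (simp add: VV_def)
  next
    case (Suc s')
    obtain a b c d e where "lz_state N A v w gam s' = (a, b, c, d, e)" by (cases "lz_state N A v w gam s'") auto
    then show ?thesis using Suc by (simp add: VV_def lzV_def Let_def)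
  qed
  have f3: "fst (snd (snd (lz_state N A v w gam s))) = WW s"
  proof (cases s)
    case 0 then show ?thesis by (simp add: WW_def)
  next
    case (Suc s')
    obtain a b c d e where "lz_state N A v w gam s' = (a, b, c, d, e)" by (cases "lz_state N A v w gam s'") auto
    then show ?thesis using Suc by (simp add: WW_def lzW_def Let_def)
  qed
  show ?thesis using f1 f3
    by (simp add: VV_def WW_def be_def lzV_def lzW_def lzbeta_def prod_eq_iff)
qed

lemma VV1: "VV 1 = kronI v" by (simp add: VV_def lzV_def)
lemma WW1: "WW 1 = kronI (\<lambda>i. cnj (w i))" by (simp add: WW_def lzW_def)
lemma VV0: "VV 0 = (\<lambda>_. 0)" by (simp add: VV_def)
lemma WW0: "WW 0 = (\<lambda>_. 0)" by (simp add: WW_def)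
lemma al_def': "1 \<le> j \<Longrightarrow> al j = hip N (WW j) (tvec N A (VV j))"
  by (simp add: al_def lzalpha_def VV_def WW_def)

lemma step:
  assumes "1 \<le> j"
  shows "VV (Suc j) = (\<lambda>i. hV j i ** matrix_inv (be (Suc j)))"
    "WW (Suc j) = (\<lambda>i. matrix_inv (gam (Suc j)) ** hW j i)"
    "be (Suc j) = matrix_inv (gam (Suc j)) ** hip N (hW j) (hV j)"
proof -
  obtain s where s: "j = Suc s" using assms by (cases j) auto
  have e: "lz_state N A v w gam j = (VV j, VV (Suc j), WW j, WW (Suc j), be (Suc j))" by (rule state)
  have "lz_state N A v w gam j = (VV j, (\<lambda>i. hV j i ** matrix_inv (matrix_inv (gam (Suc j)) ** hip N (hW j) (hV j))),
      WW j, (\<lambda>i. matrix_inv (gam (Suc j)) ** hW j i), matrix_inv (gam (Suc j)) ** hip N (hW j) (hV j))"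
    unfolding s using state[of s] al_def'[of "Suc s"]
    by (simp add: Let_def hV_def hW_def)
  then show "VV (Suc j) = (\<lambda>i. hV j i ** matrix_inv (be (Suc j)))"
    "WW (Suc j) = (\<lambda>i. matrix_inv (gam (Suc j)) ** hW j i)"
    "be (Suc j) = matrix_inv (gam (Suc j)) ** hip N (hW j) (hV j)"
    using e by auto
qed


lemma hip_lmul: "hip N (\<lambda>i. a ** Y i) X = a ** hip N Y X"
  by (simp add: hip_def mm_simps)
lemma hip_rmul: "hip N Y (\<lambda>i. X i ** b) = hip N Y X ** b"
  by (simp add: hip_def mm_simps)
lemma hip_0l: "hip N (\<lambda>_. 0) X = 0" by (simp add: hip_def)
lemma hip_0r: "hip N Y (\<lambda>_. 0) = 0" by (simp add: hip_def)
lemma hip_addl: "hip N (\<lambda>i. Y i + Z i) X = hip N Y X + hip N Z X"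
  by (simp add: hip_def mm_simps sum.distrib)
lemma hip_addr: "hip N Y (\<lambda>i. X i + Z i) = hip N Y X + hip N Y Z"
  by (simp add: hip_def mm_simps sum.distrib)
lemma hip_diffl: "hip N (\<lambda>i. Y i - Z i) X = hip N Y X - hip N Z X"
  by (simp add: hip_def mm_simps sum_subtractf)
lemma hip_diffr: "hip N Y (\<lambda>i. X i - Z i) = hip N Y X - hip N Y Z"
  by (simp add: hip_def mm_simps sum_subtractf)

lemma tvec_VV: "tvec N A (VV j) = (\<lambda>i. hV j i + VV j i ** al j + VV (j - 1) i ** gam j)"
  by (simp add: hV_def)
lemma tlvec_WW: "tlvec N (WW j) A = (\<lambda>i. hW j i + al j ** WW j i + be j ** WW (j - 1) i)"
  by (simp add: hW_def)

lemma hV_eq: assumes "1 \<le> j" "j < Suc m" shows "hV j = (\<lambda>i. VV (Suc j) i ** be (Suc j))"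
proof -
  have "invertible (be (Suc j))" using beta_inv assms by (simp add: be_def)
  then show ?thesis using step(1)[OF assms(1)]
    by (simp add: inv_l flip: matrix_mul_assoc)
qed

lemma hW_eq: assumes "1 \<le> j" shows "hW j = (\<lambda>i. gam (Suc j) ** WW (Suc j) i)"
proof -
  have "invertible (gam (Suc j))" using gam_inv assms by simp
  then show ?thesis using step(2)[OF assms(1)]
    by (simp add: inv_r matrix_mul_assoc)
qed

lemma hip_hW_hV: assumes "1 \<le> j" shows "hip N (hW j) (hV j) = gam (Suc j) ** be (Suc j)"
proof -
  have "invertible (gam (Suc j))" using gam_inv assms by simp
  then show ?thesis using step(3)[OF assms(1)]
    by (simp add: inv_r matrix_mul_assoc)
qed

definition "ortho k \<longleftrightarrow> (\<forall>i\<le>k. \<forall>j\<le>k. hip N (WW i) (VV j) = (if i = j \<and> 1 \<le> i then mat 1 else 0))"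

lemma ortho1: "ortho 1"
proof -
  have "hip N (WW 1) (VV 1) = mat 1"
    using wv unfolding WW1 VV1 hip_def kronI_def by (simp add: mat_mul_mat sum_mat)
  then show ?thesis unfolding ortho_def
    by (auto simp: le_Suc_eq VV0 WW0 hip_0l hip_0r)
qed


lemma O1:
  assumes ok: "ortho k" and k: "1 \<le> k" "k \<le> Suc m" and i: "i \<le> k"
  shows "hip N (WW i) (hV k) = 0"
proof -
  have ort: "\<And>a b. a \<le> k \<Longrightarrow> b \<le> k \<Longrightarrow> hip N (WW a) (VV b) = (if a = b \<and> 1 \<le> a then mat 1 else 0)"
    using ok unfolding ortho_def by blast
  have e: "hip N (WW i) (hV k) = hip N (WW i) (tvec N A (VV k)) - hip N (WW i) (VV k) ** al k
      - hip N (WW i) (VV (k - 1)) ** gam k"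
    unfolding hV_def by (simp add: hip_diffr hip_rmul)
  consider "i = 0" | "i = k" | "1 \<le> i" "i < k" using i by linarith
  then show ?thesis
  proof cases
    case 1 then show ?thesis using e by (simp add: WW0 hip_0l)
  next
    case 2 then show ?thesis using e k ort[of k k] ort[of k "k - 1"] by (simp add: al_def')
  next
    case 3
    have "hip N (WW i) (tvec N A (VV k)) = hip N (tlvec N (WW i) A) (VV k)" by (rule hip_tvec)
    also have "\<dots> = gam (Suc i) ** hip N (WW (Suc i)) (VV k) + al i ** hip N (WW i) (VV k)
        + be i ** hip N (WW (i - 1)) (VV k)"
      unfolding tlvec_WW hW_eq[OF 3(1)] by (simp add: hip_addl hip_lmul)
    finally have t: "hip N (WW i) (tvec N A (VV k)) = gam (Suc i) ** hip N (WW (Suc i)) (VV k) + al i ** hip N (WW i) (VV k)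
        + be i ** hip N (WW (i - 1)) (VV k)" .
    show ?thesis using e t 3 ort[of "Suc i" k] ort[of i k] ort[of "i - 1" k] ort[of i "k - 1"]
      by (cases "Suc i = k") auto
  qed
qed

lemma O2:
  assumes ok: "ortho k" and k: "1 \<le> k" "k \<le> Suc m" and j: "j \<le> k"
  shows "hip N (hW k) (VV j) = 0"
proof -
  have ort: "\<And>a b. a \<le> k \<Longrightarrow> b \<le> k \<Longrightarrow> hip N (WW a) (VV b) = (if a = b \<and> 1 \<le> a then mat 1 else 0)"
    using ok unfolding ortho_def by blast
  have e: "hip N (hW k) (VV j) = hip N (WW k) (tvec N A (VV j)) - al k ** hip N (WW k) (VV j)
      - be k ** hip N (WW (k - 1)) (VV j)"
    unfolding hW_def by (simp add: hip_diffl hip_lmul hip_tvec)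
  consider "j = 0" | "j = k" | "1 \<le> j" "j < k" using j by linarith
  then show ?thesis
  proof cases
    case 1 then show ?thesis using e by (simp add: VV0 hip_0r tvec_def)
  next
    case 2
    have "k - 1 \<noteq> k" using k by simp
    then show ?thesis using e k ort[of k k] ort[of "k - 1" k] 2 by (simp add: al_def' hip_tvec)
  next
    case 3
    have jm: "j < Suc m" using 3 k by linarith
    have t: "hip N (WW k) (tvec N A (VV j)) = hip N (WW k) (VV (Suc j)) ** be (Suc j) + hip N (WW k) (VV j) ** al j
        + hip N (WW k) (VV (j - 1)) ** gam j"
      unfolding tvec_VV hV_eq[OF 3(1) jm] by (simp add: hip_addr hip_rmul)
    show ?thesis using e t 3 ort[of k "Suc j"] ort[of k j] ort[of k "j - 1"] ort[of "k - 1" j]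
      by (cases "Suc j = k") auto
  qed
qed

lemma ortho_step:
  assumes ok: "ortho k" and k: "1 \<le> k" "Suc k \<le> Suc m"
  shows "ortho (Suc k)"
proof -
  have ort: "\<And>a b. a \<le> k \<Longrightarrow> b \<le> k \<Longrightarrow> hip N (WW a) (VV b) = (if a = b \<and> 1 \<le> a then mat 1 else 0)"
    using ok unfolding ortho_def by blast
  have km: "k < Suc m" using k by simp
  have a: "hip N (WW i) (VV (Suc k)) = 0" if "i \<le> k" for i
    using O1[OF ok k(1) _ that] k by (simp add: step(1)[OF k(1)] hip_rmul)
  have b: "hip N (WW (Suc k)) (VV j) = 0" if "j \<le> k" for j
    using O2[OF ok k(1) _ that] k by (simp add: step(2)[OF k(1)] hip_lmul)
  have ib: "invertible (be (Suc k))" using beta_inv k by (simp add: be_def)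
  have ig: "invertible (gam (Suc k))" using gam_inv k by simp
  have c: "hip N (WW (Suc k)) (VV (Suc k)) = mat 1"
    unfolding step(1)[OF k(1)] step(2)[OF k(1)]
    by (simp add: hip_lmul hip_rmul hip_hW_hV[OF k(1)] matrix_mul_assoc inv_l[OF ig] inv_r[OF ib]
        flip: matrix_mul_assoc)
  show ?thesis unfolding ortho_def
  proof (intro allI impI)
    fix i j assume "i \<le> Suc k" "j \<le> Suc k"
    then show "hip N (WW i) (VV j) = (if i = j \<and> 1 \<le> i then mat 1 else 0)"
      using ort a b c by (auto simp: le_Suc_eq)
  qed
qed

lemma ortho_all: "1 \<le> k \<Longrightarrow> k \<le> Suc m \<Longrightarrow> ortho k"
proof (induction k)
  case 0 then show ?case by simp
next
  case (Suc k)
  show ?case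
  proof (cases "k = 0")
    case True then show ?thesis using ortho1 by simp
  next
    case False then show ?thesis using Suc ortho_step by simp
  qed
qed


abbreviation "TT \<equiv> lzT N A v w gam (Suc m)"
definition "comb c = (\<lambda>i. \<Sum>l<Suc m. VV (Suc l) i ** c l)"
definition "combL d = (\<lambda>i. \<Sum>l<Suc m. d l ** WW (Suc l) i)"

lemma sumA: "(\<Sum>p<Suc k. if p < k then f p else 0) = (\<Sum>p<k. f p)"
  by (simp add: sum.lessThan_Suc)
lemma sumB: "(\<Sum>p<Suc k. if 1 \<le> p then f p else 0) = (\<Sum>q<k. f (Suc q))"
  by (subst sum.lessThan_Suc_shift) simp

lemma T_row: assumes "p < Suc m"
  shows "(\<Sum>q<Suc m. TT p q ** c q) = al (Suc p) ** c p + (if p < m then gam (Suc (Suc p)) ** c (Suc p) else 0)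
     + (if 1 \<le> p then be (Suc p) ** c (p - 1) else 0)"
proof -
  have pm: "\<not> p < m \<Longrightarrow> p = m" using assms by simp
  have h: "TT p q ** c q = (if q = p then al (Suc p) ** c q else 0) + (if q = Suc p then gam (Suc (Suc p)) ** c q else 0)
     + (if Suc q = p then be (Suc p) ** c q else 0)" if "q < Suc m" for q
    using assms that by (auto simp: lzT_def al_def be_def)
  have "(\<Sum>q<Suc m. TT p q ** c q) = (\<Sum>q<Suc m. (if q = p then al (Suc p) ** c q else 0)) + (\<Sum>q<Suc m. if q = Suc p then gam (Suc (Suc p)) ** c q else 0)
     + (\<Sum>q<Suc m. if Suc q = p then be (Suc p) ** c q else 0)"
    by (simp add: h sum.distrib)
  also have "\<dots> = al (Suc p) ** c p + (if p < m then gam (Suc (Suc p)) ** c (Suc p) else 0)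
     + (if 1 \<le> p then be (Suc p) ** c (p - 1) else 0)"
  proof -
    have s3: "(\<Sum>q<Suc m. if Suc q = p then be (Suc p) ** c q else 0) = (if 1 \<le> p then be (Suc p) ** c (p - 1) else 0)"
      using assms by (cases p) (auto simp: sum.delta)
    show ?thesis using assms by (simp only: s3) (auto simp: sum.delta less_Suc_eq)
  qed
  finally show ?thesis .
qed

lemma T_col: assumes "q < Suc m"
  shows "(\<Sum>p<Suc m. d p ** TT p q) = d q ** al (Suc q) + (if 1 \<le> q then d (q - 1) ** gam (Suc q) else 0)
     + (if q < m then d (Suc q) ** be (Suc (Suc q)) else 0)"
proof -
  have pm: "\<not> q < m \<Longrightarrow> q = m" using assms by simp
  have h: "d p ** TT p q = (if p = q then d p ** al (Suc q) else 0) + (if Suc p = q then d p ** gam (Suc q) else 0)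
     + (if p = Suc q then d p ** be (Suc (Suc q)) else 0)" if "p < Suc m" for p
    using assms that by (auto simp: lzT_def al_def be_def)
  have "(\<Sum>p<Suc m. d p ** TT p q) = (\<Sum>p<Suc m. (if p = q then d p ** al (Suc q) else 0)) + (\<Sum>p<Suc m. if Suc p = q then d p ** gam (Suc q) else 0)
     + (\<Sum>p<Suc m. if p = Suc q then d p ** be (Suc (Suc q)) else 0)"
    by (simp add: h sum.distrib)
  also have "\<dots> = d q ** al (Suc q) + (if 1 \<le> q then d (q - 1) ** gam (Suc q) else 0)
     + (if q < m then d (Suc q) ** be (Suc (Suc q)) else 0)"
  proof -
    have s3: "(\<Sum>p<Suc m. if Suc p = q then d p ** gam (Suc q) else 0) = (if 1 \<le> q then d (q - 1) ** gam (Suc q) else 0)"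
      using assms by (cases q) (auto simp: sum.delta)
    show ?thesis using assms by (simp only: s3) (auto simp: sum.delta less_Suc_eq)
  qed
  finally show ?thesis .
qed


lemma tvec_lin: "tvec N' B (\<lambda>i. \<Sum>l\<in>S. X l i ** c l) = (\<lambda>i. \<Sum>l\<in>S. tvec N' B (X l) i ** c l)"
  unfolding tvec_def by (simp add: mm_simps) (rule ext, rule sum.swap)
lemma tlvec_lin: "tlvec N' (\<lambda>i. \<Sum>l\<in>S. d l ** Y l i) B = (\<lambda>i. \<Sum>l\<in>S. d l ** tlvec N' (Y l) B i)"
  unfolding tlvec_def by (simp add: mm_simps) (rule ext, rule sum.swap)

lemma E: "tvec N A (comb c) = (\<lambda>i. comb (tvec (Suc m) TT c) i + hV (Suc m) i ** c m)"
proof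
  fix i
  have "tvec N A (comb c) i = (\<Sum>l<Suc m. tvec N A (VV (Suc l)) i ** c l)"
    unfolding comb_def tvec_lin by simp
  also have "\<dots> = (\<Sum>l<Suc m. hV (Suc l) i ** c l) + (\<Sum>l<Suc m. VV (Suc l) i ** al (Suc l) ** c l)
      + (\<Sum>l<Suc m. VV l i ** gam (Suc l) ** c l)"
    unfolding tvec_VV by (simp add: mm_radd sum.distrib)
  also have "(\<Sum>l<Suc m. hV (Suc l) i ** c l) = (\<Sum>l<m. VV (Suc (Suc l)) i ** be (Suc (Suc l)) ** c l) + hV (Suc m) i ** c m"
    by (simp add: sum.lessThan_Suc hV_eq)
  also have "(\<Sum>l<Suc m. VV l i ** gam (Suc l) ** c l) = (\<Sum>l<m. VV (Suc l) i ** gam (Suc (Suc l)) ** c (Suc l))"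
    by (subst sum.lessThan_Suc_shift) (simp add: VV0)
  finally have L: "tvec N A (comb c) i = (\<Sum>l<m. VV (Suc (Suc l)) i ** be (Suc (Suc l)) ** c l) + hV (Suc m) i ** c m
      + (\<Sum>l<Suc m. VV (Suc l) i ** al (Suc l) ** c l) + (\<Sum>l<m. VV (Suc l) i ** gam (Suc (Suc l)) ** c (Suc l))" .
  have "comb (tvec (Suc m) TT c) i = (\<Sum>p<Suc m. VV (Suc p) i ** (\<Sum>q<Suc m. TT p q ** c q))"
    unfolding comb_def tvec_def by simp
  also have "\<dots> = (\<Sum>p<Suc m. VV (Suc p) i ** (al (Suc p) ** c p + (if p < m then gam (Suc (Suc p)) ** c (Suc p) else 0)
     + (if 1 \<le> p then be (Suc p) ** c (p - 1) else 0)))"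
    by (rule sum.cong[OF refl], subst T_row) auto
  also have "\<dots> = (\<Sum>p<Suc m. VV (Suc p) i ** al (Suc p) ** c p) + (\<Sum>p<Suc m. if p < m then VV (Suc p) i ** gam (Suc (Suc p)) ** c (Suc p) else 0)
     + (\<Sum>p<Suc m. if 1 \<le> p then VV (Suc p) i ** be (Suc p) ** c (p - 1) else 0)"
    by (simp add: matrix_add_ldistrib sum.distrib matrix_mul_assoc if_distrib[of "(**) (VV _ i)"] cong: if_cong)
  also have "\<dots> = (\<Sum>p<Suc m. VV (Suc p) i ** al (Suc p) ** c p) + (\<Sum>p<m. VV (Suc p) i ** gam (Suc (Suc p)) ** c (Suc p))
     + (\<Sum>q<m. VV (Suc (Suc q)) i ** be (Suc (Suc q)) ** c q)"
    by (simp only: sumA sumB) simp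
  finally show "tvec N A (comb c) i = comb (tvec (Suc m) TT c) i + hV (Suc m) i ** c m"
    using L by (simp add: algebra_simps)
qed


lemma EL: "tlvec N (combL d) A = (\<lambda>i. combL (tlvec (Suc m) d TT) i + d m ** hW (Suc m) i)"
proof
  fix i
  have "tlvec N (combL d) A i = (\<Sum>l<Suc m. d l ** tlvec N (WW (Suc l)) A i)"
    unfolding combL_def tlvec_lin by simp
  also have "\<dots> = (\<Sum>l<Suc m. d l ** hW (Suc l) i) + (\<Sum>l<Suc m. d l ** al (Suc l) ** WW (Suc l) i)
      + (\<Sum>l<Suc m. d l ** be (Suc l) ** WW l i)"
    unfolding tlvec_WW by (simp add: matrix_add_ldistrib sum.distrib matrix_mul_assoc)
  also have "(\<Sum>l<Suc m. d l ** hW (Suc l) i) = (\<Sum>l<m. d l ** gam (Suc (Suc l)) ** WW (Suc (Suc l)) i) + d m ** hW (Suc m) i"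
    by (simp add: sum.lessThan_Suc hW_eq matrix_mul_assoc del: hW_eq[of "Suc m"])
  also have "(\<Sum>l<Suc m. d l ** be (Suc l) ** WW l i) = (\<Sum>q<m. d (Suc q) ** be (Suc (Suc q)) ** WW (Suc q) i)"
    by (subst sum.lessThan_Suc_shift) (simp add: WW0)
  finally have L: "tlvec N (combL d) A i = (\<Sum>l<m. d l ** gam (Suc (Suc l)) ** WW (Suc (Suc l)) i) + d m ** hW (Suc m) i
      + (\<Sum>l<Suc m. d l ** al (Suc l) ** WW (Suc l) i) + (\<Sum>q<m. d (Suc q) ** be (Suc (Suc q)) ** WW (Suc q) i)" .
  have "combL (tlvec (Suc m) d TT) i = (\<Sum>q<Suc m. (\<Sum>p<Suc m. d p ** TT p q) ** WW (Suc q) i)"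
    unfolding combL_def tlvec_def by simp
  also have "\<dots> = (\<Sum>q<Suc m. (d q ** al (Suc q) + (if 1 \<le> q then d (q - 1) ** gam (Suc q) else 0)
     + (if q < m then d (Suc q) ** be (Suc (Suc q)) else 0)) ** WW (Suc q) i)"
    by (rule sum.cong[OF refl], subst T_col) auto
  also have "\<dots> = (\<Sum>q<Suc m. d q ** al (Suc q) ** WW (Suc q) i) + (\<Sum>q<Suc m. if 1 \<le> q then d (q - 1) ** gam (Suc q) ** WW (Suc q) i else 0)
     + (\<Sum>q<Suc m. if q < m then d (Suc q) ** be (Suc (Suc q)) ** WW (Suc q) i else 0)"
    by (simp add: mm_radd sum.distrib if_distrib[of "\<lambda>x. x ** WW _ i"] cong: if_cong)
  also have "\<dots> = (\<Sum>q<Suc m. d q ** al (Suc q) ** WW (Suc q) i) + (\<Sum>l<m. d l ** gam (Suc (Suc l)) ** WW (Suc (Suc l)) i)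
     + (\<Sum>q<m. d (Suc q) ** be (Suc (Suc q)) ** WW (Suc q) i)"
    by (simp only: sumA sumB) simp
  finally show "tlvec N (combL d) A i = combL (tlvec (Suc m) d TT) i + d m ** hW (Suc m) i"
    using L by (simp add: algebra_simps)
qed


lemma hip_lin_l: "hip N' (\<lambda>i. \<Sum>l\<in>S. d l ** Y l i) X = (\<Sum>l\<in>S. d l ** hip N' (Y l) X)"
  unfolding hip_def by (simp add: mm_simps) (rule sum.swap)

lemma hip_bilin: "hip N' (\<lambda>i. \<Sum>l\<in>S. d l ** Y l i) (\<lambda>i. \<Sum>p\<in>R. X p i ** c p)
   = (\<Sum>l\<in>S. \<Sum>p\<in>R. d l ** hip N' (Y l) (X p) ** c p)"
  unfolding hip_lin_l hip_def by (simp add: mm_simps) (rule sum.cong[OF refl], rule sum.swap)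

lemma L1: "hip N (combL d) (comb c) = hip (Suc m) d c"
proof -
  have ok: "ortho (Suc m)" by (rule ortho_all) simp_all
  have "hip N (combL d) (comb c) = (\<Sum>l<Suc m. \<Sum>p<Suc m. d l ** hip N (WW (Suc l)) (VV (Suc p)) ** c p)"
    unfolding combL_def comb_def by (rule hip_bilin)
  also have "\<dots> = (\<Sum>l<Suc m. \<Sum>p<Suc m. if p = l then d l ** c p else 0)"
    using ok unfolding ortho_def by (intro sum.cong refl) auto
  also have "\<dots> = hip (Suc m) d c" by (simp add: hip_def sum.delta)
  finally show ?thesis .
qed

lemma L2: "hip N (combL d) (tvec N A (comb c)) = hip (Suc m) d (tvec (Suc m) TT c)"
proof -
  have ok: "ortho (Suc m)" by (rule ortho_all) simp_all
  have z: "hip N (combL d) (hV (Suc m)) = 0"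
    unfolding combL_def hip_lin_l using O1[OF ok] by simp
  show ?thesis unfolding E by (simp add: hip_addr hip_rmul z L1)
qed

lemma TT_zero: "\<not> q \<le> Suc k \<Longrightarrow> TT q k = 0"
  by (auto simp: lzT_def)

lemma TT_zero2: "\<not> q \<le> Suc p \<Longrightarrow> TT p q = 0"
  by (auto simp: lzT_def)

lemma supp: "j < q \<Longrightarrow> PA (Suc m) TT j E1 q = 0"
proof (induction j arbitrary: q)
  case 0 then show ?case by (simp add: PA_def E1_def)
next
  case (Suc j)
  have "TT q k ** PA (Suc m) TT j E1 k = 0" for k
    using Suc by (cases "q \<le> Suc k") (auto simp: TT_zero)
  then show ?case by (simp add: PA_def tvec_def)
qed

lemma suppL: "j < q \<Longrightarrow> QA (Suc m) TT j E1 q = 0"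
proof (induction j arbitrary: q)
  case 0 then show ?case by (simp add: QA_def E1_def)
next
  case (Suc j)
  have "QA (Suc m) TT j E1 p ** TT p q = 0" for p
    using Suc by (cases "q \<le> Suc p") (auto simp: TT_zero2)
  then show ?case by (simp add: QA_def tlvec_def)
qed

lemma L3: "j \<le> m \<Longrightarrow> PA N A j (VV 1) = comb (PA (Suc m) TT j E1)"
proof (induction j)
  case 0
  have "comb E1 = VV 1"
    by (rule ext) (simp add: comb_def E1_def if_distrib[of "(**) (VV _ _)"] sum.delta cong: if_cong)
  then show ?case by (simp add: PA_def)
next
  case (Suc j)
  have c0: "PA (Suc m) TT j E1 m = 0" using Suc by (intro supp) simp
  have "PA N A (Suc j) (VV 1) = tvec N A (PA N A j (VV 1))" by (simp add: PA_def)
  also have "\<dots> = tvec N A (comb (PA (Suc m) TT j E1))" using Suc by simp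
  also have "\<dots> = comb (PA (Suc m) TT (Suc j) E1)" unfolding E c0 by (simp add: PA_def)
  finally show ?case .
qed

lemma L4: "j \<le> m \<Longrightarrow> QA N A j (WW 1) = combL (QA (Suc m) TT j E1)"
proof (induction j)
  case 0
  have "combL E1 = WW 1"
    by (rule ext) (simp add: combL_def E1_def if_distrib[of "\<lambda>x. x ** WW _ _"] sum.delta cong: if_cong)
  then show ?case by (simp add: QA_def)
next
  case (Suc j)
  have c0: "QA (Suc m) TT j E1 m = 0" using Suc by (intro suppL) simp
  have "QA N A (Suc j) (WW 1) = tlvec N (QA N A j (WW 1)) A" by (simp add: QA_def)
  also have "\<dots> = tlvec N (combL (QA (Suc m) TT j E1)) A" using Suc by simp
  also have "\<dots> = combL (QA (Suc m) TT (Suc j) E1)" unfolding EL c0 by (simp add: QA_def)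
  finally show ?case .
qed

lemma main: "k < 2 * Suc m \<Longrightarrow> hip N (WW 1) (PA N A k (VV 1)) = hip (Suc m) E1 (PA (Suc m) TT k E1)"
proof -
  assume k: "k < 2 * Suc m"
  show ?thesis
  proof (cases "k \<le> 2 * m")
    case True
    define j1 where "j1 = min k m"
    define j2 where "j2 = k - j1"
    have kk: "k = j2 + j1" and j1: "j1 \<le> m" and j2: "j2 \<le> m" using True by (auto simp: j1_def j2_def)
    have "hip N (WW 1) (PA N A k (VV 1)) = hip N (QA N A j2 (WW 1)) (PA N A j1 (VV 1))"
      unfolding kk by (rule hip_PA_split)
    also have "\<dots> = hip (Suc m) (QA (Suc m) TT j2 E1) (PA (Suc m) TT j1 E1)"
      by (simp only: L3[OF j1] L4[OF j2] L1)
    also have "\<dots> = hip (Suc m) E1 (PA (Suc m) TT k E1)"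
      unfolding kk by (rule hip_PA_split[symmetric])
    finally show ?thesis .
  next
    case False
    then have kk: "k = m + Suc m" using k by simp
    have "hip N (WW 1) (PA N A k (VV 1)) = hip N (QA N A m (WW 1)) (PA N A (Suc m) (VV 1))"
      unfolding kk by (rule hip_PA_split)
    also have "PA N A (Suc m) (VV 1) = tvec N A (PA N A m (VV 1))" by (simp add: PA_def)
    also have "hip N (QA N A m (WW 1)) (tvec N A (PA N A m (VV 1))) =
        hip (Suc m) (QA (Suc m) TT m E1) (tvec (Suc m) TT (PA (Suc m) TT m E1))"
      by (simp only: L3[OF order_refl] L4[OF order_refl] L2)
    also have "tvec (Suc m) TT (PA (Suc m) TT m E1) = PA (Suc m) TT (Suc m) E1" by (simp add: PA_def)
    also have "hip (Suc m) (QA (Suc m) TT m E1) (PA (Suc m) TT (Suc m) E1) = hip (Suc m) E1 (PA (Suc m) TT k E1)"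
      unfolding kk by (rule hip_PA_split[symmetric])
    finally show ?thesis .
  qed
qed

end

theorem theorem3p2:
  fixes N n :: nat and A :: "'m::finite tens" and v w :: "nat \<Rightarrow> complex"
    and gam :: "nat \<Rightarrow> 'm cmat"
  assumes wv: "(\<Sum>i<N. cnj (w i) * v i) = 1"
    and gam_inv: "\<forall>k\<ge>2. invertible (gam k)"
    and n1: "n \<ge> 1"
    and beta_inv: "\<forall>j. 2 \<le> j \<and> j \<le> n \<longrightarrow> invertible (lzbeta N A v w gam j)"
  shows "\<forall>k < 2 * n.
    hip N (kronI (\<lambda>i. cnj (w i))) (tvec N (tpow N A k) (kronI v))
    = hip n E1 (tvec n (tpow n (lzT N A v w gam n) k) E1)"
proof -
  obtain m where nm: "n = Suc m" using n1 by (cases n) auto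
  interpret lzl N A v w gam m
    using wv gam_inv beta_inv nm by unfold_locales auto
  show ?thesis
  proof (intro allI impI)
    fix k assume k: "k < 2 * n"
    have "hip N (kronI (\<lambda>i. cnj (w i))) (tvec N (tpow N A k) (kronI v)) = hip N (WW 1) (PA N A k (VV 1))"
      by (simp only: hip_tpow WW1 VV1)
    also have "\<dots> = hip (Suc m) E1 (PA (Suc m) TT k E1)" using k nm by (intro main) simp
    also have "\<dots> = hip n E1 (tvec n (tpow n (lzT N A v w gam n) k) E1)"
      by (simp add: hip_tpow nm)
    finally show "hip N (kronI (\<lambda>i. cnj (w i))) (tvec N (tpow N A k) (kronI v))
      = hip n E1 (tvec n (tpow n (lzT N A v w gam n) k) E1)" .
  qed
qed

end
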